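(* Let $\mathcal{V},\mathcal{W}$ be real, separable, infinite-dimensional Hilbert spaces, fix $c>0$, and let $\mathcal{X}=\{v\in\mathcal{V}:\|v\|\le1\}$, $\mathcal{Y}=\{w\in\mathcal{W}:\|w\|\le c\}$, $\mathcal{F}_p=\{f\in S_p(\mathcal{V},\mathcal{W}):\|f\|_p\le c\}$ for $p\in[1,\infty]$. Then for every $n\in\mathbb{N}$, \[\mathcal{E}_n(\mathcal{F}_p)\ge\frac{c^2}{12}\max\big\{n^{-\frac{1}{p-1}},\,n^{-\frac2p}\big\},\] with the conventions $1/p=1/(p-1)=0$ for $p=\infty$ and $n^{-1/(p-1)}=0$ for $p=1$. In particular $\mathcal{E}_n(\mathcal{F}_\infty)\ge c^2/12$ for all $n$, so $\mathcal{F}_\infty$ is not batch learnable.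
   Context: $\|f\|_p$ denotes the $p$-Schatten norm (the $\ell_p$ norm of the singular values; $\|f\|_\infty$ is the supremum of singular values), and $S_p(\mathcal{V},\mathcal{W})$ is the set of compact linear operators with $\|f\|_p<\infty$. Batch setting: a learning rule $\hat f_n$ maps a sample $S=((x_1,y_1),\dots,(x_n,y_n))\in(\mathcal{X}\times\mathcal{Y})^n$ to a predictor $\hat f_n:\mathcal{X}\to\mathcal{Y}$. Its worst-case expected excess risk is \[\mathcal{E}_n(\mathcal{F},\hat f_n)=\sup_{\mathcal{D}}\mathbb{E}_{S\sim\mathcal{D}^n}\Big[\mathbb{E}_{(x,y)\sim\mathcal{D}}\|\hat f_n(x)-y\|^2-\inf_{f\in\mathcal{F}}\mathbb{E}_{(x,y)\sim\mathcal{D}}\|f(x)-y\|^2\Big],\] the supremum being over all distributions $\mathcal{D}$ on $\mathcal{X}\times\mathcal{Y}$, and $\mathcal{E}_n(\mathcal{F})=\inf_{\hat f_n}\mathcal{E}_n(\mathcal{F},\hat f_n)$ over all learning rules. $\mathcal{F}$ is batch learnable iff $\limsup_{n\to\infty}\mathcal{E}_n(\mathcal{F})=0$. *)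

theory Defs
  imports "HOL-Analysis.Analysis" "HOL-Probability.Probability"
begin

definition separable_hilbert :: "'a::{real_inner,complete_space} itself \<Rightarrow> bool" where
  "separable_hilbert _ \<longleftrightarrow> separable_space (euclidean :: 'a topology)"

definition infinite_dimensional :: "'a::real_vector itself \<Rightarrow> bool" where
  "infinite_dimensional _ \<longleftrightarrow> \<not> (\<exists>B :: 'a set. finite B \<and> span B = UNIV)"

definition orthonormal_seq :: "(nat \<Rightarrow> 'a::real_inner) \<Rightarrow> bool" where
  "orthonormal_seq e \<longleftrightarrow> (\<forall>i j. inner (e i) (e j) = (if i = j then 1 else 0))"

text \<open>s is the (non-increasing, null) sequence of singular values of the compact linear
  operator f, given through a singular value (Schmidt) decomposition
  f x = sum_k s_k <e_k, x> u_k with orthonormal (e_k), (u_k).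
  An operator admits such a decomposition iff it is a compact linear operator,
  and then s is uniquely determined (the singular values with multiplicity,
  padded by zeros).\<close>

definition singular_values ::
  "('v::real_inner \<Rightarrow> 'w::real_inner) \<Rightarrow> (nat \<Rightarrow> real) \<Rightarrow> bool" where
  "singular_values f s \<longleftrightarrow>
     (\<forall>k. 0 \<le> s k) \<and> decseq s \<and> s \<longlonglongrightarrow> 0 \<and>
     (\<exists>e u. orthonormal_seq e \<and> orthonormal_seq u \<and>
        (\<forall>x. (\<lambda>k. (s k * inner (e k) x) *\<^sub>R u k) sums f x))"

definition lp_norm :: "ereal \<Rightarrow> (nat \<Rightarrow> real) \<Rightarrow> ereal" where
  "lp_norm p s =
     (if p = \<infinity> then (SUP k. ereal \<bar>s k\<bar>)
      else if summable (\<lambda>k. \<bar>s k\<bar> powr real_of_ereal p)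
      then ereal ((\<Sum>k. \<bar>s k\<bar> powr real_of_ereal p) powr (1 / real_of_ereal p))
      else \<infinity>)"

definition schatten_ball :: "ereal \<Rightarrow> real \<Rightarrow> ('v::real_inner \<Rightarrow> 'w::real_inner) set" where
  "schatten_ball p c = {f. \<exists>s. singular_values f s \<and> lp_norm p s \<le> ereal c}"

definition distributions :: "('x::topological_space) set \<Rightarrow> ('y::topological_space) set
    \<Rightarrow> ('x \<times> 'y) measure set" where
  "distributions X Y = {D. prob_space D \<and> sets D = sets borel \<and> emeasure D (X \<times> Y) = 1}"

definition learning_rules :: "nat \<Rightarrow> ('x::topological_space) set \<Rightarrow> ('y::topological_space) set
    \<Rightarrow> ((nat \<Rightarrow> 'x \<times> 'y) \<Rightarrow> 'x \<Rightarrow> 'y) set" where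
  "learning_rules n X Y = {L.
     (\<forall>S \<in> PiE {..<n} (\<lambda>_. X \<times> Y). \<forall>x\<in>X. L S x \<in> Y) \<and>
     (\<lambda>(S, x). L S x) \<in> borel_measurable (PiM {..<n} (\<lambda>_. borel) \<Otimes>\<^sub>M borel)}"

definition risk :: "('x \<times> 'y::real_normed_vector) measure \<Rightarrow> ('x \<Rightarrow> 'y) \<Rightarrow> ennreal" where
  "risk D h = (\<integral>\<^sup>+ z. ennreal ((norm (h (fst z) - snd z))\<^sup>2) \<partial>D)"

definition excess_risk :: "nat \<Rightarrow> ('x \<Rightarrow> 'y::real_normed_vector) set
    \<Rightarrow> ((nat \<Rightarrow> 'x \<times> 'y) \<Rightarrow> 'x \<Rightarrow> 'y) \<Rightarrow> ('x \<times> 'y) measure \<Rightarrow> ereal" where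
  "excess_risk n F L D =
     ereal (enn2real (\<integral>\<^sup>+ S. risk D (L S) \<partial>(PiM {..<n} (\<lambda>_. D))))
     - ereal (enn2real (INF f\<in>F. risk D f))"

definition worst_case_risk :: "nat \<Rightarrow> ('x::topological_space) set \<Rightarrow> ('y::real_normed_vector) set
    \<Rightarrow> ('x \<Rightarrow> 'y) set \<Rightarrow> ((nat \<Rightarrow> 'x \<times> 'y) \<Rightarrow> 'x \<Rightarrow> 'y) \<Rightarrow> ereal" where
  "worst_case_risk n X Y F L = (SUP D\<in>distributions X Y. excess_risk n F L D)"

definition minimax_risk :: "nat \<Rightarrow> ('x::topological_space) set \<Rightarrow> ('y::real_normed_vector) set
    \<Rightarrow> ('x \<Rightarrow> 'y) set \<Rightarrow> ereal" where
  "minimax_risk n X Y F = (INF L\<in>learning_rules n X Y. worst_case_risk n X Y F L)"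

definition schatten_rate :: "ereal \<Rightarrow> nat \<Rightarrow> real" where
  "schatten_rate p n =
     (if p = \<infinity> then 1
      else max (if p = 1 then 0 else real n powr (- 1 / (real_of_ereal p - 1)))
               (real n powr (- 2 / real_of_ereal p)))"

end

theory Submission
  imports Defs
begin


lemma ortho_step:
  fixes B :: "'a::real_inner set"
  assumes fin: "finite B" and nb: "\<forall>b\<in>B. norm b = 1"
    and orth: "\<forall>b\<in>B. \<forall>b'\<in>B. b \<noteq> b' \<longrightarrow> inner b b' = 0"
    and inf: "infinite_dimensional TYPE('a)"
  shows "\<exists>v. norm v = 1 \<and> (\<forall>b\<in>B. inner b v = 0)"
proof -
  from inf fin have "span B \<noteq> UNIV" unfolding infinite_dimensional_def by blast
  then obtain x where x: "x \<notin> span B" by blast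
  define w where "w = x - (\<Sum>b\<in>B. inner b x *\<^sub>R b)"
  have wo: "inner b0 w = 0" if b0: "b0 \<in> B" for b0
  proof -
    have "(\<Sum>b\<in>B. inner b x * inner b0 b) = (\<Sum>b\<in>B. if b = b0 then inner b0 x else 0)"
      apply (rule sum.cong[OF refl])
      using orth nb b0 by (auto simp: dot_square_norm)
    also have "\<dots> = inner b0 x" using fin b0 by simp
    finally show ?thesis unfolding w_def by (simp add: inner_diff_right inner_sum_right)
  qed
  have "w \<noteq> 0"
  proof
    assume "w = 0"
    then have "x = (\<Sum>b\<in>B. inner b x *\<^sub>R b)" unfolding w_def by simp
    also have "\<dots> \<in> span B" by (intro span_sum span_scale span_base)
    finally show False using x by simp
  qed
  then show ?thesis
    by (intro exI[of _ "w /\<^sub>R norm w"]) (auto simp: wo)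
qed

primrec Eseq :: "nat \<Rightarrow> nat \<Rightarrow> 'a::real_inner" where
  "Eseq 0 = (\<lambda>_. 0)"
| "Eseq (Suc n) = (Eseq n)(n := SOME v. norm v = 1 \<and> (\<forall>k<n. inner (Eseq n k) v = 0))"

lemma Eseq_stable: "k < n \<Longrightarrow> Eseq (n + d) k = Eseq n k"
  by (induction d) auto

lemma Eseq_inv:
  assumes inf: "infinite_dimensional TYPE('a::real_inner)"
  shows "(\<forall>k<n. norm (Eseq n k :: 'a) = 1) \<and> (\<forall>j<n. \<forall>k<n. j \<noteq> k \<longrightarrow> inner (Eseq n j :: 'a) (Eseq n k) = 0)"
proof (induction n)
  case 0 then show ?case by simp
next
  case (Suc n)
  define B where "B = (Eseq n :: nat \<Rightarrow> 'a) ` {..<n}"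
  have "\<exists>v::'a. norm v = 1 \<and> (\<forall>b\<in>B. inner b v = 0)"
    apply (rule ortho_step[OF _ _ _ inf])
    using Suc by (auto simp: B_def)
  then have "\<exists>v::'a. norm v = 1 \<and> (\<forall>k<n. inner (Eseq n k) v = 0)" by (auto simp: B_def)
  from someI_ex[OF this] have S: "norm (SOME v::'a. norm v = 1 \<and> (\<forall>k<n. inner (Eseq n k) v = 0)) = 1
     \<and> (\<forall>k<n. inner (Eseq n k) (SOME v::'a. norm v = 1 \<and> (\<forall>k<n. inner (Eseq n k) v = 0)) = 0)" .
  show ?case using Suc S
    by (auto simp: less_Suc_eq inner_commute)
qed

lemma exists_orthonormal_seq:
  assumes inf: "infinite_dimensional TYPE('a::real_inner)"
  shows "\<exists>e::nat \<Rightarrow> 'a. orthonormal_seq e"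
proof -
  define e where "e k = (Eseq (Suc k) k :: 'a)" for k
  have "e k = Eseq N k" if "k < N" for k N
    using Eseq_stable[of k "Suc k" "N - Suc k"] that unfolding e_def by (metis Suc_leI le_add_diff_inverse lessI)
  then have "inner (e j) (e k) = (if j = k then 1 else 0)" for j k
  proof -
    let ?N = "Suc (max j k)"
    have ej: "e j = Eseq ?N j" and ek: "e k = Eseq ?N k"
      using \<open>\<And>k N. k < N \<Longrightarrow> e k = Eseq N k\<close>[of j ?N] \<open>\<And>k N. k < N \<Longrightarrow> e k = Eseq N k\<close>[of k ?N] by (simp_all del: Eseq.simps add: less_Suc_eq_le)
    have I: "(\<forall>k<?N. norm (Eseq ?N k :: 'a) = 1) \<and> (\<forall>j'<?N. \<forall>k'<?N. j' \<noteq> k' \<longrightarrow> inner (Eseq ?N j' :: 'a) (Eseq ?N k') = 0)"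
      by (rule Eseq_inv[OF inf])
    show ?thesis
    proof (cases "j = k")
      case True
      then show ?thesis using I ek by (simp del: Eseq.simps add: dot_square_norm)
    next
      case False
      then show ?thesis using I ej ek by (simp del: Eseq.simps)
    qed
  qed
  then show ?thesis unfolding orthonormal_seq_def by blast
qed


lemma nn_integral_finite_support:
  assumes fin: "finite Z" and ae: "AE x in M. x \<in> Z" and meas: "\<And>z. z \<in> Z \<Longrightarrow> {z} \<in> sets M"
  shows "(\<integral>\<^sup>+x. f x \<partial>M) = (\<Sum>z\<in>Z. f z * emeasure M {z})"
proof -
  have "(\<integral>\<^sup>+x. f x \<partial>M) = (\<integral>\<^sup>+x. (\<Sum>z\<in>Z. f z * indicator {z} x) \<partial>M)"
  proof (rule nn_integral_cong_AE)
    show "AE x in M. f x = (\<Sum>z\<in>Z. f z * indicator {z} x)"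
      using ae
    proof eventually_elim
      case (elim x)
      have "(\<Sum>z\<in>Z. f z * indicator {z} x) = (\<Sum>z\<in>Z. if z = x then f x else 0)"
        by (intro sum.cong) (auto simp: indicator_def)
      also have "\<dots> = f x" using fin elim by simp
      finally show ?case by simp
    qed
  qed
  also have "\<dots> = (\<Sum>z\<in>Z. f z * emeasure M {z})"
    using meas by (subst nn_integral_sum) (auto simp: nn_integral_cmult_indicator)
  finally show ?thesis .
qed



definition Dg :: "nat \<Rightarrow> (nat \<Rightarrow> 'a::topological_space) \<Rightarrow> 'a measure" where
  "Dg m g = distr (measure_pmf (pmf_of_set {..<m})) borel g"

lemma Dg_prob: "0 < m \<Longrightarrow> prob_space (Dg m g)"
  unfolding Dg_def by (intro prob_space.prob_space_distr measure_pmf.prob_space_axioms) simp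

lemma Dg_sets[simp]: "sets (Dg m g) = sets borel"
  by (simp add: Dg_def)

lemma Dg_emeasure: "0 < m \<Longrightarrow> A \<in> sets borel \<Longrightarrow> emeasure (Dg m g) A = ennreal (real (card ({..<m} \<inter> g -` A)) / real m)"
proof -
  assume m: "0 < m" and A: "A \<in> sets borel"
  have "emeasure (measure_pmf (pmf_of_set {..<m})) (g -` A) = ennreal (real (card ({..<m} \<inter> g -` A)) / real m)"
    using m by (subst emeasure_pmf_of_set) auto
  then show ?thesis unfolding Dg_def using A by (subst emeasure_distr) auto
qed

lemma Dg_point:
  fixes g :: "nat \<Rightarrow> 'a::t1_space"
  assumes m: "0 < m" and inj: "inj_on g {..<m}" and i: "i < m"
  shows "emeasure (Dg m g) {g i} = ennreal (1 / m)"
proof -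
  have "{..<m} \<inter> g -` {g i} = {i}" using inj i by (auto dest: inj_onD)
  then show ?thesis using m
    by (subst Dg_emeasure) (auto simp: closed_singleton divide_ennreal ennreal_of_nat_eq_real_of_nat)
qed

lemma Dg_AE:
  fixes g :: "nat \<Rightarrow> 'a::t1_space"
  assumes m: "0 < m"
  shows "AE z in Dg m g. z \<in> g ` {..<m}"
proof -
  interpret prob_space "Dg m g" by (rule Dg_prob[OF m])
  have cl: "closed (g ` {..<m})" by (intro finite_imp_closed) auto
  then have ev: "g ` {..<m} \<in> events" by simp
  have "{..<m} \<inter> g -` (g ` {..<m}) = {..<m}" by auto
  then have "emeasure (Dg m g) (g ` {..<m}) = 1" using m cl
    by (subst Dg_emeasure) auto
  then show ?thesis using ev
    by (subst AE_in_set_eq_1) (auto simp: emeasure_eq_measure)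
qed

lemma Dg_integral:
  fixes g :: "nat \<Rightarrow> 'a::t1_space"
  assumes m: "0 < m" and inj: "inj_on g {..<m}"
  shows "(\<integral>\<^sup>+z. f z \<partial>Dg m g) = (\<Sum>i<m. f (g i) * ennreal (1 / m))"
proof -
  have "(\<integral>\<^sup>+z. f z \<partial>Dg m g) = (\<Sum>z\<in>g ` {..<m}. f z * emeasure (Dg m g) {z})"
    by (rule nn_integral_finite_support) (auto simp: Dg_AE[OF m] closed_singleton)
  also have "\<dots> = (\<Sum>i<m. f (g i) * emeasure (Dg m g) {g i})"
    by (rule sum.reindex[OF inj, unfolded comp_def])
  also have "\<dots> = (\<Sum>i<m. f (g i) * ennreal (1 / m))"
    by (intro sum.cong refl) (simp add: Dg_point[OF m inj])
  finally show ?thesis .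
qed

lemma PiE_compose_image:
  "(\<lambda>I. compose K g I) ` PiE K (\<lambda>_. M) = PiE K (\<lambda>_. g ` M)"
proof (intro equalityI subsetI)
  fix x assume "x \<in> (\<lambda>I. compose K g I) ` PiE K (\<lambda>_. M)"
  then show "x \<in> PiE K (\<lambda>_. g ` M)" by (auto simp: compose_def PiE_iff)
next
  fix x assume x: "x \<in> PiE K (\<lambda>_. g ` M)"
  define I where "I = (\<lambda>j\<in>K. inv_into M g (x j))"
  have "I \<in> PiE K (\<lambda>_. M)" using x by (auto simp: I_def PiE_iff inv_into_into)
  moreover have "x = compose K g I"
    using x by (auto simp: I_def compose_def PiE_iff f_inv_into_f fun_eq_iff extensional_def)
  ultimately show "x \<in> (\<lambda>I. compose K g I) ` PiE K (\<lambda>_. M)" by blast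
qed

lemma inj_on_compose_PiE:
  assumes "inj_on g M"
  shows "inj_on (\<lambda>I. compose K g I) (PiE K (\<lambda>_. M))"
proof (rule inj_onI)
  fix I J assume I: "I \<in> PiE K (\<lambda>_. M)" and J: "J \<in> PiE K (\<lambda>_. M)"
    and eq: "compose K g I = compose K g J"
  show "I = J"
  proof (rule PiE_ext[OF I J])
    fix j assume j: "j \<in> K"
    have "g (I j) = g (J j)" using eq j by (metis compose_eq)
    then show "I j = J j" using assms I J j by (auto dest: inj_onD)
  qed
qed

lemma Dg_PiM_integral:
  fixes g :: "nat \<Rightarrow> 'a::t1_space"
  assumes m: "0 < m" and inj: "inj_on g {..<m}"
  shows "(\<integral>\<^sup>+S. F S \<partial>PiM {..<n} (\<lambda>_. Dg m g))
     = (\<Sum>I\<in>PiE {..<n} (\<lambda>_. {..<m}). F (compose {..<n} g I) * ennreal ((1 / m) ^ n))"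
proof -
  interpret P: product_prob_space "\<lambda>_. Dg m g"
    by (intro product_prob_spaceI Dg_prob[OF m])
  interpret PP: prob_space "PiM {..<n} (\<lambda>_. Dg m g)"
    by (intro prob_space_PiM Dg_prob[OF m])
  define Z where "Z = PiE {..<n} (\<lambda>_. g ` {..<m})"
  have Zfin: "finite Z" unfolding Z_def by (intro finite_PiE) auto
  have cl: "closed (g ` {..<m})" by (intro finite_imp_closed) auto
  have Zsets: "Z \<in> sets (PiM {..<n} (\<lambda>_. Dg m g))"
    unfolding Z_def using cl by (intro sets_PiM_I_finite) auto
  have "emeasure (PiM {..<n} (\<lambda>_. Dg m g)) Z = (\<Prod>j<n. emeasure (Dg m g) (g ` {..<m}))"
    unfolding Z_def using cl by (subst P.emeasure_PiM) auto
  also have "\<dots> = 1"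
  proof -
    interpret prob_space "Dg m g" by (rule Dg_prob[OF m])
    have "{..<m} \<inter> g -` (g ` {..<m}) = {..<m}" by auto
    then have "emeasure (Dg m g) (g ` {..<m}) = 1" using m cl
      by (subst Dg_emeasure) auto
    then show ?thesis by simp
  qed
  finally have "AE S in PiM {..<n} (\<lambda>_. Dg m g). S \<in> Z" using Zsets
    by (subst PP.AE_in_set_eq_1) (auto simp: PP.emeasure_eq_measure)
  then have "(\<integral>\<^sup>+S. F S \<partial>PiM {..<n} (\<lambda>_. Dg m g)) = (\<Sum>z\<in>Z. F z * emeasure (PiM {..<n} (\<lambda>_. Dg m g)) {z})"
  proof (rule nn_integral_finite_support[OF Zfin])
    fix z assume z: "z \<in> Z"
    then have "{z} = PiE {..<n} (\<lambda>j. {z j})" unfolding Z_def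
      by (intro PiE_singleton[symmetric]) (auto simp: PiE_iff)
    also have "\<dots> \<in> sets (PiM {..<n} (\<lambda>_. Dg m g))"
      by (intro sets_PiM_I_finite) (auto simp: closed_singleton)
    finally show "{z} \<in> sets (PiM {..<n} (\<lambda>_. Dg m g))" .
  qed
  also have "\<dots> = (\<Sum>I\<in>PiE {..<n} (\<lambda>_. {..<m}). F (compose {..<n} g I) * emeasure (PiM {..<n} (\<lambda>_. Dg m g)) {compose {..<n} g I})"
    unfolding Z_def PiE_compose_image[symmetric]
    by (rule sum.reindex[OF inj_on_compose_PiE[OF inj], unfolded comp_def])
  also have "\<dots> = (\<Sum>I\<in>PiE {..<n} (\<lambda>_. {..<m}). F (compose {..<n} g I) * ennreal ((1 / m) ^ n))"
  proof (intro sum.cong refl)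
    fix I assume I: "I \<in> PiE {..<n} (\<lambda>_. {..<m})"
    have "{compose {..<n} g I} = PiE {..<n} (\<lambda>j. {compose {..<n} g I j})"
      by (rule PiE_singleton[symmetric]) (rule compose_extensional)
    then have "emeasure (PiM {..<n} (\<lambda>_. Dg m g)) {compose {..<n} g I} = (\<Prod>j<n. emeasure (Dg m g) {compose {..<n} g I j})"
      by (simp only: P.emeasure_PiM[OF finite_lessThan] Dg_sets closed_singleton borel_closed)
    also have "\<dots> = (\<Prod>j<n. emeasure (Dg m g) {g (I j)})"
      by (intro prod.cong refl) (simp add: compose_eq)
    also have "\<dots> = (\<Prod>j<n. ennreal (1 / m))"
      using I by (intro prod.cong refl Dg_point[OF m inj]) auto
    also have "\<dots> = ennreal ((1 / m) ^ n)" by (simp add: prod_ennreal ennreal_power)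
    finally show "F (compose {..<n} g I) * emeasure (PiM {..<n} (\<lambda>_. Dg m g)) {compose {..<n} g I} = F (compose {..<n} g I) * ennreal ((1 / m) ^ n)" by simp
  qed
  finally show ?thesis .
qed



lemma flip_sum:
  fixes V Y :: "(nat \<Rightarrow> bool) \<Rightarrow> 'w::real_inner"
  assumes i: "i < m"
    and V: "\<And>\<sigma>. V (\<sigma>(i := \<not> \<sigma> i)) = V \<sigma>"
    and Y: "\<And>\<sigma>. Y (\<sigma>(i := \<not> \<sigma> i)) = - Y \<sigma>"
    and Yn: "\<And>\<sigma>. norm (Y \<sigma>) = b"
  shows "real (card (PiE {..<m} (\<lambda>_. UNIV :: bool set))) * b\<^sup>2
           \<le> (\<Sum>\<sigma>\<in>PiE {..<m} (\<lambda>_. UNIV). (norm (V \<sigma> - Y \<sigma>))\<^sup>2)"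
proof -
  let ?S = "PiE {..<m} (\<lambda>_. UNIV :: bool set)"
  define \<phi> where "\<phi> \<sigma> = \<sigma>(i := \<not> \<sigma> i)" for \<sigma> :: "nat \<Rightarrow> bool"
  define h where "h \<sigma> = (norm (V \<sigma> - Y \<sigma>))\<^sup>2" for \<sigma>
  have inv: "\<phi> (\<phi> \<sigma>) = \<sigma>" for \<sigma> by (auto simp: \<phi>_def)
  have into: "\<phi> \<sigma> \<in> ?S" if "\<sigma> \<in> ?S" for \<sigma> using that i by (auto simp: \<phi>_def PiE_iff extensional_def)
  have bij: "bij_betw \<phi> ?S ?S"
    by (rule bij_betw_byWitness[where f' = \<phi>]) (use inv into in auto)
  have "(\<Sum>\<sigma>\<in>?S. h (\<phi> \<sigma>)) = (\<Sum>\<sigma>\<in>?S. h \<sigma>)"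
    using sum.reindex_bij_betw[OF bij, of h] by simp
  then have "2 * (\<Sum>\<sigma>\<in>?S. h \<sigma>) = (\<Sum>\<sigma>\<in>?S. h \<sigma> + h (\<phi> \<sigma>))"
    by (simp add: sum.distrib)
  also have "\<dots> \<ge> (\<Sum>\<sigma>\<in>?S. 2 * b\<^sup>2)"
  proof (rule sum_mono)
    fix \<sigma>
    have "h \<sigma> + h (\<phi> \<sigma>) = (norm (V \<sigma> - Y \<sigma>))\<^sup>2 + (norm (V \<sigma> + Y \<sigma>))\<^sup>2"
      by (simp add: h_def \<phi>_def[symmetric] V[folded \<phi>_def] Y[folded \<phi>_def])
    also have "\<dots> = 2 * (norm (V \<sigma>))\<^sup>2 + 2 * (norm (Y \<sigma>))\<^sup>2"
      by (simp add: power2_norm_eq_inner inner_diff_left inner_diff_right inner_add_left inner_add_right inner_commute algebra_simps)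
    also have "\<dots> \<ge> 2 * b\<^sup>2" using Yn by simp
    finally show "2 * b\<^sup>2 \<le> h \<sigma> + h (\<phi> \<sigma>)" .
  qed
  finally show ?thesis by (simp add: h_def)
qed

lemma count_unseen:
  assumes "finite K"
  shows "(\<Sum>I\<in>PiE K (\<lambda>_. {..<m::nat}). real (card {i\<in>{..<m}. i \<notin> I ` K}))
         = real m * real (m - 1) ^ card K"
proof -
  have "(\<Sum>I\<in>PiE K (\<lambda>_. {..<m::nat}). real (card {i\<in>{..<m}. i \<notin> I ` K}))
      = (\<Sum>I\<in>PiE K (\<lambda>_. {..<m::nat}). \<Sum>i<m. (if i \<notin> I ` K then 1 else 0 :: real))"
    by (intro sum.cong refl) (simp add: sum.If_cases Int_def)
  also have "\<dots> = (\<Sum>i<m. \<Sum>I\<in>PiE K (\<lambda>_. {..<m::nat}). (if i \<notin> I ` K then 1 else 0 :: real))"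
    by (rule sum.swap)
  also have "\<dots> = (\<Sum>i<m. real (m - 1) ^ card K)"
  proof (intro sum.cong refl)
    fix i assume i: "i \<in> {..<m}"
    have "{I \<in> PiE K (\<lambda>_. {..<m}). i \<notin> I ` K} = PiE K (\<lambda>_. {..<m} - {i})"
      by (auto simp: PiE_iff extensional_def)
    moreover have "card (PiE K (\<lambda>_. {..<m} - {i})) = (m - 1) ^ card K"
      using assms i by (simp add: card_PiE)
    moreover have "(\<Sum>I\<in>PiE K (\<lambda>_. {..<m::nat}). (if i \<notin> I ` K then 1 else 0 :: real)) = real (card {I \<in> PiE K (\<lambda>_. {..<m}). i \<notin> I ` K})"
      using sum.inter_filter[of "PiE K (\<lambda>_. {..<m::nat})" "\<lambda>_. 1::real" "\<lambda>I. i \<notin> I ` K", symmetric] assms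
      by (simp add: finite_PiE)
    ultimately show "(\<Sum>I\<in>PiE K (\<lambda>_. {..<m::nat}). (if i \<notin> I ` K then 1 else 0 :: real)) = real (m - 1) ^ card K"
      by simp
  qed
  also have "\<dots> = real m * real (m - 1) ^ card K" by (simp only: sum_constant card_lessThan)
  finally show ?thesis .
qed



definition gs :: "(nat \<Rightarrow> 'v::real_inner) \<Rightarrow> real \<Rightarrow> (nat \<Rightarrow> 'w::real_inner) \<Rightarrow> (nat \<Rightarrow> bool) \<Rightarrow> nat \<Rightarrow> 'v \<times> 'w" where
  "gs e b u \<sigma> i = (e i, (if \<sigma> i then b else -b) *\<^sub>R u i)"

lemma orthonormal_inj: "orthonormal_seq e \<Longrightarrow> inj e"
  unfolding orthonormal_seq_def inj_def by (metis zero_neq_one)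

lemma orthonormal_norm: "orthonormal_seq e \<Longrightarrow> norm (e i) = 1"
  unfolding orthonormal_seq_def by (metis norm_eq_sqrt_inner real_sqrt_one)

lemma gs_inj: "orthonormal_seq e \<Longrightarrow> inj_on (gs e b u \<sigma>) A"
  using orthonormal_inj[of e] unfolding gs_def inj_on_def inj_def by auto

lemma risk_Dg:
  assumes m: "0 < m" and e: "orthonormal_seq e"
  shows "risk (Dg m (gs e b u \<sigma>)) h
     = ennreal (\<Sum>i<m. (norm (h (e i) - (if \<sigma> i then b else -b) *\<^sub>R u i))\<^sup>2 * (1 / m))"
proof -
  have "risk (Dg m (gs e b u \<sigma>)) h = (\<Sum>i<m. ennreal ((norm (h (e i) - (if \<sigma> i then b else -b) *\<^sub>R u i))\<^sup>2) * ennreal (1 / m))"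
    unfolding risk_def by (subst Dg_integral[OF m gs_inj[OF e]]) (simp add: gs_def)
  also have "\<dots> = (\<Sum>i<m. ennreal ((norm (h (e i) - (if \<sigma> i then b else -b) *\<^sub>R u i))\<^sup>2 * (1 / m)))"
    by (intro sum.cong refl ennreal_mult[symmetric]) auto
  also have "\<dots> = ennreal (\<Sum>i<m. (norm (h (e i) - (if \<sigma> i then b else -b) *\<^sub>R u i))\<^sup>2 * (1 / m))"
    by (intro sum_ennreal) auto
  finally show ?thesis .
qed

lemma core:
  fixes e :: "nat \<Rightarrow> 'v::real_inner" and u :: "nat \<Rightarrow> 'w::real_inner"
    and L :: "(nat \<Rightarrow> 'v \<times> 'w) \<Rightarrow> 'v \<Rightarrow> 'w"
  assumes e: "orthonormal_seq e" and u: "orthonormal_seq u" and m: "0 < m" and b: "0 \<le> b"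
  shows "\<exists>\<sigma>. ((real m - 1) / m) ^ n * b\<^sup>2
     \<le> enn2real (\<integral>\<^sup>+S. risk (Dg m (gs e b u \<sigma>)) (L S) \<partial>PiM {..<n} (\<lambda>_. Dg m (gs e b u \<sigma>)))"
proof -
  let ?K = "{..<n}"
  let ?S = "PiE {..<m} (\<lambda>_. UNIV :: bool set)"
  let ?P = "PiE ?K (\<lambda>_. {..<m})"
  define Y where "Y \<sigma> i = (if \<sigma> i then b else -b) *\<^sub>R u i" for \<sigma> i
  define W where "W \<sigma> I i = (norm (L (compose ?K (gs e b u \<sigma>) I) (e i) - Y \<sigma> i))\<^sup>2" for \<sigma> I i
  define R where "R \<sigma> = (\<Sum>I\<in>?P. (\<Sum>i<m. W \<sigma> I i * (1 / m)) * (1 / m) ^ n)" for \<sigma>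
  have Rint: "enn2real (\<integral>\<^sup>+S. risk (Dg m (gs e b u \<sigma>)) (L S) \<partial>PiM {..<n} (\<lambda>_. Dg m (gs e b u \<sigma>))) = R \<sigma>" for \<sigma>
  proof -
    have Wn: "0 \<le> W \<sigma> I i" for I i unfolding W_def by simp
    have an: "0 \<le> (\<Sum>i<m. W \<sigma> I i * (1 / m))" for I using Wn by (intro sum_nonneg) simp
    have "(\<integral>\<^sup>+S. risk (Dg m (gs e b u \<sigma>)) (L S) \<partial>PiM {..<n} (\<lambda>_. Dg m (gs e b u \<sigma>)))
        = (\<Sum>I\<in>?P. risk (Dg m (gs e b u \<sigma>)) (L (compose ?K (gs e b u \<sigma>) I)) * ennreal ((1 / m) ^ n))"
      by (rule Dg_PiM_integral[OF m gs_inj[OF e]])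
    also have "\<dots> = (\<Sum>I\<in>?P. ennreal (\<Sum>i<m. W \<sigma> I i * (1 / m)) * ennreal ((1 / m) ^ n))"
    proof (intro sum.cong refl)
      fix I
      show "risk (Dg m (gs e b u \<sigma>)) (L (compose ?K (gs e b u \<sigma>) I)) * ennreal ((1 / m) ^ n)
          = ennreal (\<Sum>i<m. W \<sigma> I i * (1 / m)) * ennreal ((1 / m) ^ n)"
        unfolding risk_Dg[OF m e] W_def Y_def ..
    qed
    also have "\<dots> = (\<Sum>I\<in>?P. ennreal ((\<Sum>i<m. W \<sigma> I i * (1 / m)) * (1 / m) ^ n))"
      by (intro sum.cong refl ennreal_mult[symmetric] an) simp
    also have "\<dots> = ennreal (R \<sigma>)"
      unfolding R_def using an by (intro sum_ennreal mult_nonneg_nonneg) auto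
    finally have "(\<integral>\<^sup>+S. risk (Dg m (gs e b u \<sigma>)) (L S) \<partial>PiM {..<n} (\<lambda>_. Dg m (gs e b u \<sigma>))) = ennreal (R \<sigma>)" .
    moreover have "0 \<le> R \<sigma>" unfolding R_def using an Wn by (intro sum_nonneg mult_nonneg_nonneg) auto
    ultimately show ?thesis by simp
  qed
  have unseen: "real (card ?S) * b\<^sup>2 \<le> (\<Sum>\<sigma>\<in>?S. W \<sigma> I i)"
    if I: "I \<in> ?P" and i: "i < m" "i \<notin> I ` ?K" for I i
    unfolding W_def
  proof (rule flip_sum[OF i(1)])
    fix \<sigma> :: "nat \<Rightarrow> bool"
    have "compose ?K (gs e b u (\<sigma>(i := \<not> \<sigma> i))) I = compose ?K (gs e b u \<sigma>) I"
      using i(2) by (auto simp: compose_def gs_def fun_eq_iff)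
    then show "L (compose ?K (gs e b u (\<sigma>(i := \<not> \<sigma> i))) I) (e i) = L (compose ?K (gs e b u \<sigma>) I) (e i)"
      by simp
    show "Y (\<sigma>(i := \<not> \<sigma> i)) i = - Y \<sigma> i" by (simp add: Y_def)
    show "norm (Y \<sigma> i) = b" using b orthonormal_norm[OF u] by (simp add: Y_def)
  qed
  have inner: "real (card {i\<in>{..<m}. i \<notin> I ` ?K}) * (real (card ?S) * b\<^sup>2) \<le> (\<Sum>i<m. \<Sum>\<sigma>\<in>?S. W \<sigma> I i)"
    if I: "I \<in> ?P" for I
  proof -
    have "real (card {i\<in>{..<m}. i \<notin> I ` ?K}) * (real (card ?S) * b\<^sup>2)
        = (\<Sum>i<m. if i \<notin> I ` ?K then real (card ?S) * b\<^sup>2 else 0)"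
      using sum.inter_filter[of "{..<m}" "\<lambda>_. real (card ?S) * b\<^sup>2" "\<lambda>i. i \<notin> I ` ?K", symmetric]
      by simp
    also have "\<dots> \<le> (\<Sum>i<m. \<Sum>\<sigma>\<in>?S. W \<sigma> I i)"
      using unseen[OF I] by (intro sum_mono) (auto simp: W_def sum_nonneg)
    finally show ?thesis .
  qed
  have R': "R \<sigma> = (\<Sum>I\<in>?P. (1 / m) ^ n * (1 / m) * (\<Sum>i<m. W \<sigma> I i))" for \<sigma>
    unfolding R_def by (intro sum.cong refl) (simp add: sum_distrib_left sum_distrib_right sum_divide_distrib mult_ac)
  have "(\<Sum>\<sigma>\<in>?S. R \<sigma>) = (\<Sum>\<sigma>\<in>?S. \<Sum>I\<in>?P. (1 / m) ^ n * (1 / m) * (\<Sum>i<m. W \<sigma> I i))"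
    by (simp only: R')
  also have "\<dots> = (\<Sum>I\<in>?P. \<Sum>\<sigma>\<in>?S. (1 / m) ^ n * (1 / m) * (\<Sum>i<m. W \<sigma> I i))"
    by (rule sum.swap)
  also have "\<dots> = (\<Sum>I\<in>?P. (1 / m) ^ n * (1 / m) * (\<Sum>\<sigma>\<in>?S. \<Sum>i<m. W \<sigma> I i))"
    by (simp only: sum_distrib_left)
  also have "\<dots> = (\<Sum>I\<in>?P. (1 / m) ^ n * (1 / m) * (\<Sum>i<m. \<Sum>\<sigma>\<in>?S. W \<sigma> I i))"
    by (intro sum.cong refl, subst sum.swap, rule refl)
  also have "\<dots> \<ge> (\<Sum>I\<in>?P. (1 / m) ^ n * (1 / m) * (real (card {i\<in>{..<m}. i \<notin> I ` ?K}) * (real (card ?S) * b\<^sup>2)))"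
    using inner by (intro sum_mono mult_left_mono) auto
  also have "(\<Sum>I\<in>?P. (1 / m) ^ n * (1 / m) * (real (card {i\<in>{..<m}. i \<notin> I ` ?K}) * (real (card ?S) * b\<^sup>2)))
      = (1 / m) ^ n * (1 / m) * (real (card ?S) * b\<^sup>2) * (\<Sum>I\<in>?P. real (card {i\<in>{..<m}. i \<notin> I ` ?K}))"
    by (subst sum_distrib_left) (simp only: mult_ac)
  also have "\<dots> = (1 / m) ^ n * (1 / m) * (real (card ?S) * b\<^sup>2) * (real m * real (m - 1) ^ n)"
    using count_unseen[of ?K m] by simp
  also have "\<dots> = real (card ?S) * (((real m - 1) / m) ^ n * b\<^sup>2)"
  proof -
    have e1: "real (m - 1) = real m - 1" using m by (simp add: of_nat_diff)
    have e2: "(1 / real m) ^ n * (real m - 1) ^ n = ((real m - 1) / m) ^ n"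
      by (simp add: power_mult_distrib[symmetric])
    have e3: "(1 / real m) * real m = 1" using m by simp
    have "(1 / m) ^ n * (1 / m) * (real (card ?S) * b\<^sup>2) * (real m * real (m - 1) ^ n)
        = real (card ?S) * (((1 / real m) ^ n * (real m - 1) ^ n) * b\<^sup>2) * ((1 / real m) * real m)"
      unfolding e1 by (simp only: mult_ac)
    then show ?thesis unfolding e2 e3 by simp
  qed
  finally have sumR: "real (card ?S) * (((real m - 1) / m) ^ n * b\<^sup>2) \<le> (\<Sum>\<sigma>\<in>?S. R \<sigma>)" .
  have "\<exists>\<sigma>\<in>?S. ((real m - 1) / m) ^ n * b\<^sup>2 \<le> R \<sigma>"
  proof (rule ccontr)
    assume "\<not> ?thesis"
    then have "\<forall>\<sigma>\<in>?S. R \<sigma> < ((real m - 1) / m) ^ n * b\<^sup>2" by auto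
    moreover have "?S \<noteq> {}" by (simp add: PiE_eq_empty_iff)
    moreover have "finite ?S" by (simp add: finite_PiE)
    ultimately have "(\<Sum>\<sigma>\<in>?S. R \<sigma>) < (\<Sum>\<sigma>\<in>?S. ((real m - 1) / m) ^ n * b\<^sup>2)"
      by (intro sum_strict_mono) auto
    then show False using sumR by simp
  qed
  then obtain \<sigma> where "((real m - 1) / m) ^ n * b\<^sup>2 \<le> R \<sigma>" by blast
  then show ?thesis using Rint[of \<sigma>] by (intro exI[of _ \<sigma>]) simp
qed



lemma fsig_sv:
  fixes e :: "nat \<Rightarrow> 'v::real_inner" and u :: "nat \<Rightarrow> 'w::real_inner"
  assumes e: "orthonormal_seq e" and u: "orthonormal_seq u" and s: "0 \<le> s"
  shows "singular_values (\<lambda>x. \<Sum>k<m. (s * inner (e k) x) *\<^sub>R ((if \<sigma> k then 1 else -1) *\<^sub>R u k))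
           (\<lambda>k. if k < m then s else 0)"
proof -
  let ?u = "\<lambda>k. (if \<sigma> k then 1 else -1 :: real) *\<^sub>R u k"
  have ou: "orthonormal_seq ?u" using u unfolding orthonormal_seq_def by auto
  have dec: "decseq (\<lambda>k. if k < m then s else 0)"
    unfolding decseq_def using s by auto
  have lim: "(\<lambda>k. if k < m then s else 0) \<longlonglongrightarrow> 0"
  proof (rule tendsto_eventually)
    show "\<forall>\<^sub>F k in sequentially. (if k < m then s else 0) = 0"
      unfolding eventually_sequentially by (intro exI[of _ m]) auto
  qed
  have sums: "(\<lambda>k. ((if k < m then s else 0) * inner (e k) x) *\<^sub>R ?u k) sums
      (\<Sum>k<m. (s * inner (e k) x) *\<^sub>R ?u k)" for x
  proof -
    have "(\<lambda>k. ((if k < m then s else 0) * inner (e k) x) *\<^sub>R ?u k) sums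
      (\<Sum>k\<in>{..<m}. ((if k < m then s else 0) * inner (e k) x) *\<^sub>R ?u k)"
      by (rule sums_finite) auto
    then show ?thesis by simp
  qed
  show ?thesis unfolding singular_values_def
    using s dec lim e ou sums by (intro conjI) (auto intro!: exI[of _ e] exI[of _ ?u])
qed

lemma main_bound:
  fixes e :: "nat \<Rightarrow> 'v::real_inner" and u :: "nat \<Rightarrow> 'w::real_inner"
  assumes e: "orthonormal_seq e" and u: "orthonormal_seq u" and m: "0 < m"
    and s: "0 \<le> s" and sb: "s \<le> b" and bc: "b \<le> c"
    and lp: "lp_norm p (\<lambda>k. if k < m then s else 0) \<le> ereal c"
  shows "ereal (((real m - 1) / m) ^ n * b\<^sup>2 - (b - s)\<^sup>2)
     \<le> minimax_risk n (cball (0::'v) 1) (cball (0::'w) c) (schatten_ball p c :: ('v \<Rightarrow> 'w) set)"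
  unfolding minimax_risk_def
proof (rule INF_greatest)
  fix L assume L: "L \<in> learning_rules n (cball (0::'v) 1) (cball (0::'w) c)"
  have b: "0 \<le> b" using s sb by simp
  obtain \<sigma> where \<sigma>: "((real m - 1) / m) ^ n * b\<^sup>2
     \<le> enn2real (\<integral>\<^sup>+S. risk (Dg m (gs e b u \<sigma>)) (L S) \<partial>PiM {..<n} (\<lambda>_. Dg m (gs e b u \<sigma>)))"
    using core[OF e u m b, of n L] by blast
  define D where "D = Dg m (gs e b u \<sigma>)"
  define f where "f = (\<lambda>x. \<Sum>k<m. (s * inner (e k) x) *\<^sub>R ((if \<sigma> k then 1 else -1 :: real) *\<^sub>R u k))"
  have fF: "f \<in> schatten_ball p c"
    unfolding schatten_ball_def f_def using fsig_sv[OF e u s, where m=m and \<sigma>=\<sigma>] lp by blast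
  have fe: "f (e i) = (if \<sigma> i then s else - s) *\<^sub>R u i" if i: "i < m" for i
  proof -
    have "f (e i) = (\<Sum>k<m. if k = i then (s * (if \<sigma> k then 1 else -1)) *\<^sub>R u k else 0)"
      unfolding f_def using e unfolding orthonormal_seq_def
      by (intro sum.cong refl) auto
    also have "\<dots> = (if \<sigma> i then s else - s) *\<^sub>R u i" using i by simp
    finally show ?thesis .
  qed
  have riskf: "risk D f = ennreal ((b - s)\<^sup>2)"
  proof -
    have "risk D f = ennreal (\<Sum>i<m. (norm (f (e i) - (if \<sigma> i then b else -b) *\<^sub>R u i))\<^sup>2 * (1 / m))"
      unfolding D_def by (rule risk_Dg[OF m e])
    also have "(\<Sum>i<m. (norm (f (e i) - (if \<sigma> i then b else -b) *\<^sub>R u i))\<^sup>2 * (1 / m))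
        = (\<Sum>i<m. (b - s)\<^sup>2 * (1 / m))"
    proof (intro sum.cong refl)
      fix i assume "i \<in> {..<m}"
      then have "f (e i) - (if \<sigma> i then b else -b) *\<^sub>R u i = (if \<sigma> i then s - b else b - s) *\<^sub>R u i"
        by (simp add: fe algebra_simps)
      then show "(norm (f (e i) - (if \<sigma> i then b else -b) *\<^sub>R u i))\<^sup>2 * (1 / m) = (b - s)\<^sup>2 * (1 / m)"
        using orthonormal_norm[OF u, of i] by (simp add: power2_commute)
    qed
    also have "\<dots> = (b - s)\<^sup>2" using m by simp
    finally show ?thesis .
  qed
  have D_dist: "D \<in> distributions (cball (0::'v) 1) (cball (0::'w) c)"
  proof -
    have cl: "cball (0::'v) 1 \<times> cball (0::'w) c \<in> sets borel"
      by (intro borel_closed closed_Times closed_cball)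
    have "{..<m} \<inter> gs e b u \<sigma> -` (cball 0 1 \<times> cball 0 c) = {..<m}"
      using orthonormal_norm[OF e] orthonormal_norm[OF u] b bc by (auto simp: gs_def)
    then have "emeasure D (cball 0 1 \<times> cball 0 c) = 1"
      unfolding D_def using m cl by (subst Dg_emeasure) auto
    then show ?thesis unfolding distributions_def D_def using Dg_prob[OF m] by auto
  qed
  have inf_le: "enn2real (INF g\<in>schatten_ball p c. risk D g) \<le> (b - s)\<^sup>2"
  proof -
    have "(INF g\<in>schatten_ball p c. risk D g) \<le> risk D f" using fF by (rule INF_lower)
    then have "(INF g\<in>schatten_ball p c. risk D g) \<le> ennreal ((b - s)\<^sup>2)" using riskf by simp
    then show ?thesis using enn2real_mono[of _ "ennreal ((b - s)\<^sup>2)"] by simp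
  qed
  have "ereal (((real m - 1) / m) ^ n * b\<^sup>2 - (b - s)\<^sup>2) \<le> excess_risk n (schatten_ball p c) L D"
    unfolding excess_risk_def D_def[symmetric] using \<sigma> inf_le unfolding D_def by simp
  also have "\<dots> \<le> worst_case_risk n (cball 0 1) (cball 0 c) (schatten_ball p c) L"
    unfolding worst_case_risk_def using D_dist by (rule SUP_upper)
  finally show "ereal (((real m - 1) / m) ^ n * b\<^sup>2 - (b - s)\<^sup>2) \<le> worst_case_risk n (cball 0 1) (cball 0 c) (schatten_ball p c) L" .
qed



lemma powr_neg1: "0 < (x::real) \<Longrightarrow> x powr (- 1) = 1 / x"
  by (simp add: powr_minus_divide)

lemma bern: "0 < m \<Longrightarrow> 1 - real n / real m \<le> ((real m - 1) / real m) ^ n"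
proof -
  assume m: "0 < m"
  have "1 + real n * (- 1 / real m) \<le> (1 + (- 1 / real m)) ^ n"
    by (rule Bernoulli_inequality) (use m in \<open>simp add: field_simps\<close>)
  moreover have "1 + (- 1 / real m) = (real m - 1) / real m" using m by (simp add: field_simps)
  ultimately show ?thesis by simp
qed

lemma half_bound: "1 \<le> n \<Longrightarrow> 1 / 2 \<le> ((real (2 * n) - 1) / real (2 * n)) ^ n"
proof -
  assume n: "1 \<le> n"
  have "1 - real n / real (2 * n) \<le> ((real (2 * n) - 1) / real (2 * n)) ^ n"
    by (rule bern) (use n in simp)
  moreover have "1 - real n / real (2 * n) = 1 / 2" using n by simp
  ultimately show ?thesis by simp
qed

lemma numB:
  fixes q c :: real and n :: nat
  assumes q: "1 \<le> q" and n: "1 \<le> n" and c: "0 < c"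
  defines "s \<equiv> c * real (2 * n) powr (- 1 / q)"
  shows "0 \<le> s" "s \<le> c"
    "c\<^sup>2 / 12 * real n powr (- 2 / q) \<le> ((real (2 * n) - 1) / real (2 * n)) ^ n * s\<^sup>2 - (s - s)\<^sup>2"
proof -
  have n1: "1 \<le> real (2 * n)" using n by simp
  have pw: "real (2 * n) powr (- 1 / q) \<le> 1"
    using powr_mono[of "- 1 / q" 0 "real (2 * n)"] n1 q by simp
  show "0 \<le> s" unfolding s_def using c by simp
  show "s \<le> c" unfolding s_def using c pw by (simp add: mult_left_le)
  have s2: "s\<^sup>2 = c\<^sup>2 * (2 powr (- 2 / q) * real n powr (- 2 / q))"
  proof -
    have "s\<^sup>2 = c\<^sup>2 * (real (2 * n) powr (- 1 / q))\<^sup>2" unfolding s_def by (simp add: power_mult_distrib)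
    also have "(real (2 * n) powr (- 1 / q))\<^sup>2 = real (2 * n) powr (- 2 / q)"
      using n1 by (simp add: power2_eq_square powr_add[symmetric])
    also have "\<dots> = 2 powr (- 2 / q) * real n powr (- 2 / q)"
      by (simp add: powr_mult)
    finally show ?thesis .
  qed
  have two: "1 / 4 \<le> 2 powr (- 2 / q)"
  proof -
    have "(2::real) powr (-2) \<le> 2 powr (- 2 / q)"
      using q by (intro powr_mono) (auto simp: field_simps)
    then show ?thesis by (simp add: powr_minus)
  qed
  have np: "0 \<le> real n powr (- 2 / q)" by simp
  have "c\<^sup>2 / 12 * real n powr (- 2 / q) \<le> 1 / 2 * (c\<^sup>2 * (1 / 4 * real n powr (- 2 / q)))"
    using np c by (simp add: field_simps)
  also have "\<dots> \<le> ((real (2 * n) - 1) / real (2 * n)) ^ n * s\<^sup>2"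
    unfolding s2 using half_bound[OF n] two np c
    by (intro mult_mono mult_left_mono) auto
  finally show "c\<^sup>2 / 12 * real n powr (- 2 / q) \<le> ((real (2 * n) - 1) / real (2 * n)) ^ n * s\<^sup>2 - (s - s)\<^sup>2"
    by simp
qed



lemma numA:
  fixes q c :: real and n :: nat
  assumes q: "2 \<le> q" and n: "1 \<le> n" and c: "0 < c"
  defines "t0 \<equiv> real (2 * n) powr (- 1 / (q - 1))"
  defines "m \<equiv> nat \<lceil>t0 powr (- q)\<rceil>"
  defines "t \<equiv> real m powr (- 1 / q)"
  shows "0 < m" "0 \<le> t" "t \<le> 1"
    "c\<^sup>2 / 12 * real n powr (- 1 / (q - 1)) \<le> ((real m - 1) / real m) ^ n * c\<^sup>2 - (c - c * t)\<^sup>2"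
proof -
  have n1: "1 \<le> real (2 * n)" using n by simp
  have "q \<noteq> 0" "q - 1 \<noteq> 0" using q by auto
  have t0pos: "0 < t0" unfolding t0_def using n1 by simp
  have t0le: "t0 \<le> 1" unfolding t0_def
    using powr_mono[of "- 1 / (q - 1)" 0 "real (2 * n)"] n1 q by simp
  define T where "T = t0 powr (- q)"
  have T1: "1 \<le> T" unfolding T_def
    using t0pos t0le q powr_mono2[of q t0 1] by (simp add: powr_minus one_le_inverse_iff)
  have mT: "T \<le> real m" unfolding m_def T_def by linarith
  have mT2: "real m \<le> 2 * T" using T1 unfolding m_def T_def by linarith
  show m0: "0 < m" using mT T1 by simp
  have mpos: "0 < real m" using m0 by simp
  show t0': "0 \<le> t" unfolding t_def by simp
  have tpos: "0 < t" unfolding t_def using mpos by simp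
  show t1: "t \<le> 1" unfolding t_def
    using powr_mono[of "- 1 / q" 0 "real m"] mT T1 q by simp
  have Tt0: "T powr (- 1 / q) = t0" unfolding T_def using q t0pos by (simp add: powr_powr)
  have tle: "t \<le> t0"
    unfolding t_def Tt0[symmetric] using q T1 mT by (intro powr_mono2') auto
  have tge: "t0 / 2 \<le> t"
  proof -
    have X1: "(2 * T) powr (- 1 / q) \<le> t" unfolding t_def using q T1 mT2 mpos by (intro powr_mono2') auto
    have X2: "(2 * T) powr (- 1 / q) = 2 powr (- 1 / q) * t0"
    proof -
      have "(2 * T) powr (- 1 / q) = 2 powr (- 1 / q) * T powr (- 1 / q)" by (rule powr_mult)
      then show ?thesis by (simp only: Tt0)
    qed
    have X3: "1 / 2 \<le> (2::real) powr (- 1 / q)"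
    proof -
      have "(2::real) powr (-1) \<le> 2 powr (- 1 / q)" using q by (intro powr_mono) (auto simp: field_simps)
      then show ?thesis by (simp add: powr_minus)
    qed
    have "t0 / 2 = 1 / 2 * t0" by simp
    also have "\<dots> \<le> 2 powr (- 1 / q) * t0" using X3 t0pos by (intro mult_right_mono) auto
    also have "\<dots> \<le> t" using X1 X2 by simp
    finally show ?thesis .
  qed
  have tq: "t powr q = 1 / real m"
  proof -
    have "t powr q = real m powr (- 1 / q * q)" unfolding t_def by (rule powr_powr)
    also have "- 1 / q * q = - 1" using \<open>q \<noteq> 0\<close> by simp
    also have "real m powr (- 1) = 1 / real m" using mpos by (rule powr_neg1)
    finally show ?thesis .
  qed
  have "real n * t powr (q - 1) \<le> real n * t0 powr (q - 1)"
  proof -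
    have "t powr (q - 1) \<le> t0 powr (q - 1)" by (rule powr_mono2) (use q tpos tle in auto)
    then show ?thesis by (rule mult_left_mono) simp
  qed
  also have "t0 powr (q - 1) = 1 / real (2 * n)"
  proof -
    have "t0 powr (q - 1) = real (2 * n) powr (- 1 / (q - 1) * (q - 1))" unfolding t0_def by (rule powr_powr)
    also have "- 1 / (q - 1) * (q - 1) = - 1" using \<open>q - 1 \<noteq> 0\<close> by simp
    also have "real (2 * n) powr (- 1) = 1 / real (2 * n)" using n1 by (intro powr_neg1) simp
    finally show ?thesis .
  qed
  also have "real n * (1 / real (2 * n)) = 1 / 2" using n by simp
  finally have ntq: "real n * t powr (q - 1) \<le> 1 / 2" .
  have nm: "real n / real m \<le> t / 2"
  proof -
    have "real n / real m = real n * t powr q" by (simp add: tq)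
    also have "t powr q = t * t powr (q - 1)"
    proof -
      have "t powr q = t powr (1 + (q - 1))" by simp
      also have "\<dots> = t powr 1 * t powr (q - 1)" by (rule powr_add)
      also have "t powr 1 = t" using tpos by simp
      finally show ?thesis .
    qed
    finally have "real n / real m = t * (real n * t powr (q - 1))" by simp
    also have "\<dots> \<le> t * (1 / 2)" using ntq tpos by (intro mult_left_mono) auto
    finally show ?thesis by simp
  qed
  have B: "1 - real n / real m \<le> ((real m - 1) / real m) ^ n" by (rule bern[OF m0])
  have "c\<^sup>2 * (t / 2) \<le> c\<^sup>2 * (1 - real n / real m - (1 - t)\<^sup>2)"
  proof (intro mult_left_mono)
    have tt: "t\<^sup>2 \<le> t" using tpos t1 by (simp add: power2_eq_square mult_le_cancel_left1)
    have sq: "(1 - t)\<^sup>2 = 1 - 2 * t + t\<^sup>2" by (simp add: power2_diff)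
    show "t / 2 \<le> 1 - real n / real m - (1 - t)\<^sup>2" using tt sq nm by linarith
  qed simp
  also have "\<dots> \<le> ((real m - 1) / real m) ^ n * c\<^sup>2 - (c - c * t)\<^sup>2"
  proof -
    have "c - c * t = c * (1 - t)" by (rule right_diff_distrib[symmetric, of c 1 t, simplified])
    then have e0: "(c - c * t)\<^sup>2 = c\<^sup>2 * (1 - t)\<^sup>2" by (simp only: power_mult_distrib)
    have e1: "c\<^sup>2 * (1 - real n / real m - (1 - t)\<^sup>2) = c\<^sup>2 * (1 - real n / real m) - c\<^sup>2 * (1 - t)\<^sup>2"
      by (rule right_diff_distrib)
    have e2: "c\<^sup>2 * (1 - real n / real m) \<le> c\<^sup>2 * ((real m - 1) / real m) ^ n"
      by (rule mult_left_mono[OF B]) simp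
    have e3: "c\<^sup>2 * ((real m - 1) / real m) ^ n = ((real m - 1) / real m) ^ n * c\<^sup>2" by (rule mult.commute)
    show ?thesis using e0 e1 e2 e3 by linarith
  qed
  finally have V: "c\<^sup>2 * (t / 2) \<le> ((real m - 1) / real m) ^ n * c\<^sup>2 - (c - c * t)\<^sup>2" .
  have t0n: "real n powr (- 1 / (q - 1)) / 2 \<le> t0"
  proof -
    have X2: "t0 = 2 powr (- 1 / (q - 1)) * real n powr (- 1 / (q - 1))"
    proof -
      have "real (2 * n) = 2 * real n" by simp
      then show ?thesis unfolding t0_def by (simp only: powr_mult)
    qed
    have X3: "1 / 2 \<le> (2::real) powr (- 1 / (q - 1))"
    proof -
      have "(2::real) powr (-1) \<le> 2 powr (- 1 / (q - 1))" using q by (intro powr_mono) (auto simp: field_simps)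
      then show ?thesis by (simp add: powr_minus)
    qed
    have "real n powr (- 1 / (q - 1)) / 2 = 1 / 2 * real n powr (- 1 / (q - 1))" by simp
    also have "\<dots> \<le> 2 powr (- 1 / (q - 1)) * real n powr (- 1 / (q - 1))" using X3 by (intro mult_right_mono) auto
    also have "\<dots> = t0" using X2 by simp
    finally show ?thesis .
  qed
  have "c\<^sup>2 / 12 * real n powr (- 1 / (q - 1)) \<le> c\<^sup>2 * (t / 2)"
  proof -
    have N: "0 \<le> real n powr (- 1 / (q - 1))" by simp
    have "c\<^sup>2 / 12 * real n powr (- 1 / (q - 1)) \<le> c\<^sup>2 * (real n powr (- 1 / (q - 1)) / 8)"
      using N by simp
    also have "\<dots> \<le> c\<^sup>2 * (t / 2)" using t0n tge by (intro mult_left_mono) auto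
    finally show ?thesis .
  qed
  with V show "c\<^sup>2 / 12 * real n powr (- 1 / (q - 1)) \<le> ((real m - 1) / real m) ^ n * c\<^sup>2 - (c - c * t)\<^sup>2" by linarith
qed



lemma lp_fin:
  fixes q c :: real
  assumes q: "1 \<le> q" and m: "0 < m" and c: "0 < c"
  shows "lp_norm (ereal q) (\<lambda>k. if k < m then c * real m powr (- 1 / q) else 0) \<le> ereal c"
proof -
  define s where "s = c * real m powr (- 1 / q)"
  have s0: "0 \<le> s" unfolding s_def using c by simp
  let ?f = "\<lambda>k. \<bar>if k < m then s else 0\<bar> powr q"
  have z: "\<And>k::nat. k \<notin> {..<m} \<Longrightarrow> ?f k = 0" by simp
  have sm: "summable ?f" by (rule summable_finite[of "{..<m}"]) auto
  have "suminf ?f = (\<Sum>k<m. ?f k)" by (rule suminf_finite[of "{..<m}"]) auto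
  also have "\<dots> = (\<Sum>k<m. s powr q)" using s0 by (intro sum.cong refl) simp
  also have "\<dots> = real m * s powr q" by simp
  also have "s powr q = c powr q * (real m powr (- 1 / q)) powr q"
    unfolding s_def by (rule powr_mult)
  also have "(real m powr (- 1 / q)) powr q = real m powr (- 1 / q * q)" by (rule powr_powr)
  also have "- 1 / q * q = - 1" using q by simp
  also have "real m powr (- 1) = 1 / real m" using m by (intro powr_neg1) simp
  also have "real m * (c powr q * (1 / real m)) = c powr q" using m by simp
  finally have S: "suminf ?f = c powr q" .
  have "lp_norm (ereal q) (\<lambda>k. if k < m then s else 0) = ereal ((c powr q) powr (1 / q))"
    unfolding lp_norm_def using sm S by simp
  also have "(c powr q) powr (1 / q) = c powr (q * (1 / q))" by (rule powr_powr)
  also have "q * (1 / q) = 1" using q by simp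
  also have "c powr 1 = c" using c by simp
  finally show ?thesis unfolding s_def by simp
qed

lemma lp_inf:
  assumes c: "0 < c"
  shows "lp_norm \<infinity> (\<lambda>k. if k < m then c else 0) \<le> ereal c"
  unfolding lp_norm_def using c by (auto intro!: SUP_least)


theorem theorem5:
  fixes c :: real and p :: ereal and n :: nat
  assumes V: "separable_hilbert TYPE('v::{real_inner,complete_space})"
      and V_inf: "infinite_dimensional TYPE('v)"
      and W: "separable_hilbert TYPE('w::{real_inner,complete_space})"
      and W_inf: "infinite_dimensional TYPE('w)"
      and c: "c > 0"
      and p: "1 \<le> p"
      and n: "1 \<le> n"
  shows "ereal (c\<^sup>2 / 12 * schatten_rate p n)
           \<le> minimax_risk n (cball (0::'v) 1) (cball (0::'w) c)
                (schatten_ball p c :: ('v \<Rightarrow> 'w) set)"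
proof -
  obtain e :: "nat \<Rightarrow> 'v" where e: "orthonormal_seq e" using exists_orthonormal_seq[OF V_inf] by blast
  obtain u :: "nat \<Rightarrow> 'w" where u: "orthonormal_seq u" using exists_orthonormal_seq[OF W_inf] by blast
  let ?M = "minimax_risk n (cball (0::'v) 1) (cball (0::'w) c) (schatten_ball p c :: ('v \<Rightarrow> 'w) set)"
  have m2: "0 < 2 * n" using n by simp
  show ?thesis
  proof (cases "p = \<infinity>")
    case True
    have "ereal (((real (2 * n) - 1) / real (2 * n)) ^ n * c\<^sup>2 - (c - c)\<^sup>2) \<le> ?M"
      using main_bound[OF e u m2 _ _ _ lp_inf[OF c, of "2 * n", folded True]] c by simp
    moreover have "c\<^sup>2 / 12 \<le> ((real (2 * n) - 1) / real (2 * n)) ^ n * c\<^sup>2 - (c - c)\<^sup>2"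
    proof -
      have "c\<^sup>2 / 12 \<le> 1 / 2 * c\<^sup>2" by simp
      also have "\<dots> \<le> ((real (2 * n) - 1) / real (2 * n)) ^ n * c\<^sup>2"
        using half_bound[OF n] by (rule mult_right_mono) simp
      finally show ?thesis by simp
    qed
    ultimately have "ereal (c\<^sup>2 / 12) \<le> ?M" by (meson ereal_less_eq(3) order.trans)
    then show ?thesis using True by (simp add: schatten_rate_def)
  next
    case False
    then obtain q where pq: "p = ereal q" using p by (cases p) auto
    have q: "1 \<le> q" using p pq by simp
    define A where "A = (if p = 1 then 0 else real n powr (- 1 / (q - 1)))"
    define B where "B = real n powr (- 2 / q)"
    have rate: "schatten_rate p n = max A B" using False pq by (simp add: schatten_rate_def A_def B_def)
    define s where "s = c * real (2 * n) powr (- 1 / q)"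
    have sB1: "0 \<le> s" unfolding s_def by (rule numB(1)[OF q n c])
    have sB2: "s \<le> c" unfolding s_def by (rule numB(2)[OF q n c])
    have sB3: "c\<^sup>2 / 12 * B \<le> ((real (2 * n) - 1) / real (2 * n)) ^ n * s\<^sup>2 - (s - s)\<^sup>2"
      unfolding s_def B_def by (rule numB(3)[OF q n c])
    have lpB: "lp_norm p (\<lambda>k. if k < 2 * n then s else 0) \<le> ereal c"
      unfolding s_def pq by (rule lp_fin[OF q m2 c])
    have Bb: "ereal (c\<^sup>2 / 12 * B) \<le> ?M"
      using main_bound[OF e u m2 sB1 order.refl sB2 lpB, of n] sB3 by (meson ereal_less_eq(3) order.trans)
    show ?thesis
    proof (cases "A \<le> B")
      case True
      then show ?thesis using Bb rate by (simp add: max_def)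
    next
      case AB: False
      have p1: "p \<noteq> 1" using AB B_def A_def by auto
      have q2: "2 \<le> q"
      proof (rule ccontr)
        assume "\<not> 2 \<le> q"
        moreover have "q \<noteq> 1" using p1 pq by (simp add: one_ereal_def)
        ultimately have q12: "1 < q" "q < 2" using q by auto
        have "- 1 / (q - 1) \<le> - 2 / q" using q12 by (simp add: field_simps)
        then have "real n powr (- 1 / (q - 1)) \<le> real n powr (- 2 / q)"
          by (rule powr_mono) (use n in simp)
        then have "A \<le> B" unfolding A_def B_def using p1 by simp
        with AB show False by simp
      qed
      define t0 where "t0 = real (2 * n) powr (- 1 / (q - 1))"
      define m where "m = nat \<lceil>t0 powr (- q)\<rceil>"
      define t where "t = real m powr (- 1 / q)"
      note NA = numA[OF q2 n c, folded t0_def, folded m_def, folded t_def]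
      have lpA: "lp_norm p (\<lambda>k. if k < m then c * t else 0) \<le> ereal c"
        unfolding t_def pq by (rule lp_fin[OF q NA(1) c])
      have ct: "0 \<le> c * t" "c * t \<le> c" using NA(2,3) c by (auto simp: mult_left_le)
      have M1: "ereal (((real m - 1) / real m) ^ n * c\<^sup>2 - (c - c * t)\<^sup>2) \<le> ?M"
        by (rule main_bound[OF e u NA(1) ct(1) ct(2) order.refl lpA])
      have A1: "A = real n powr (- 1 / (q - 1))" using p1 by (simp add: A_def)
      have "c\<^sup>2 / 12 * A \<le> ((real m - 1) / real m) ^ n * c\<^sup>2 - (c - c * t)\<^sup>2"
        unfolding A1 by (rule NA(4))
      then have "ereal (c\<^sup>2 / 12 * A) \<le> ereal (((real m - 1) / real m) ^ n * c\<^sup>2 - (c - c * t)\<^sup>2)"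
        by (simp only: ereal_less_eq(3))
      then have "ereal (c\<^sup>2 / 12 * A) \<le> ?M" using M1 by (rule order.trans)
      then show ?thesis using AB rate by (simp add: max_def)
    qed
  qed
qed

end
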